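(* A reaction network $(X,\mathscr{R})$ admits a Lewis realization if and only if it is conservative.
   Context: A reaction network (RN) $(X,\mathscr{R})$ consists of a finite non-empty set $X$ of species and a finite non-empty set $\mathscr{R}$ of reactions. Each reaction $r$ is given by stoichiometric coefficients $s^-_{xr},s^+_{xr}\in\mathbb{N}_0$. The stoichiometric matrix $S\in\mathbb{Z}^{X\times\mathscr{R}}$ has entries $S_{xr}=s^+_{xr}-s^-_{xr}$. The paper assumes throughout that RNs are closed: every reaction $r$ has $x,y$ with $S_{xr}<0<S_{yr}$. The RN is conservative if there is $m\in\mathbb{R}^X$ with all entries positive and $m^\top S=0$. An sf-instance is a matrix $A\in\mathbb{N}_0^{\mathcal{A}\times X}$ ($\mathcal{A}$ a non-empty finite set) with every column nonzero and $AS=0$. An sf-realization is an sf-instance with $\operatorname{im}A^\top=\ker S^\top$. Let $\mathcal{A}$ be a non-empty finite set and $\mathrm{val}:\mathcal{A}\to\mathbb{N}=\{1,2,\dots\}$ a function. Consider multigraphs (loops allowed) with vertex colouring $\alpha:V\to\mathcal{A}$. The degree $d(u)$ of a vertex is the number of non-loop edge incidences at $u$ plus twice the number of loops at $u$. A Lewis instance is an assignment of vertex-coloured multigraphs $\Gamma_x=(V_x,E_x,\alpha_x)$ to all $x\in X$ such that: - (i) $d(u)=\mathrm{val}(\alpha_x(u))$ for all $u\in V_x$ and $x\in X$; - (ii) the matrix $A$ with $A_{ax}=|\{u\in V_x:\alpha_x(u)=a\}|$ is an sf-instance. A Lewis realization is a Lewis instance whose matrix $A$ is an sf-realization (for some choice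 of $\mathcal{A}$ and $\mathrm{val}$). *)

theory Defs
  imports Complex_Main "HOL-Library.Multiset"
begin

text \<open>A reaction network on a finite nonempty species type 'x and a finite nonempty
reaction type 'r is given by stoichiometric coefficients sm (= s^-) and sp (= s^+).\<close>

definition stoich :: "('x \<Rightarrow> 'r \<Rightarrow> nat) \<Rightarrow> ('x \<Rightarrow> 'r \<Rightarrow> nat) \<Rightarrow> 'x \<Rightarrow> 'r \<Rightarrow> int" where
  "stoich sm sp x r = int (sp x r) - int (sm x r)"

definition closed_RN :: "('x \<Rightarrow> 'r \<Rightarrow> nat) \<Rightarrow> ('x \<Rightarrow> 'r \<Rightarrow> nat) \<Rightarrow> bool" where
  "closed_RN sm sp \<longleftrightarrow> (\<forall>r. \<exists>x y. stoich sm sp x r < 0 \<and> 0 < stoich sm sp y r)"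

definition conservative :: "('x::finite \<Rightarrow> 'r \<Rightarrow> nat) \<Rightarrow> ('x \<Rightarrow> 'r \<Rightarrow> nat) \<Rightarrow> bool" where
  "conservative sm sp \<longleftrightarrow>
     (\<exists>m :: 'x \<Rightarrow> real. (\<forall>x. 0 < m x) \<and>
        (\<forall>r. (\<Sum>x\<in>UNIV. m x * of_int (stoich sm sp x r)) = 0))"

definition sf_instance :: "nat set \<Rightarrow> (nat \<Rightarrow> 'x::finite \<Rightarrow> nat) \<Rightarrow> ('x \<Rightarrow> 'r \<Rightarrow> int) \<Rightarrow> bool" where
  "sf_instance Acol A S \<longleftrightarrow>
     finite Acol \<and> Acol \<noteq> {} \<and>
     (\<forall>x. \<exists>a\<in>Acol. A a x \<noteq> 0) \<and>
     (\<forall>a\<in>Acol. \<forall>r. (\<Sum>x\<in>UNIV. int (A a x) * S x r) = 0)"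

definition sf_realization :: "nat set \<Rightarrow> (nat \<Rightarrow> 'x::finite \<Rightarrow> nat) \<Rightarrow> ('x \<Rightarrow> 'r \<Rightarrow> int) \<Rightarrow> bool" where
  "sf_realization Acol A S \<longleftrightarrow>
     sf_instance Acol A S \<and>
     {v :: 'x \<Rightarrow> real. \<exists>l :: nat \<Rightarrow> real. \<forall>x. v x = (\<Sum>a\<in>Acol. l a * real (A a x))}
       = {v :: 'x \<Rightarrow> real. \<forall>r. (\<Sum>x\<in>UNIV. v x * of_int (S x r)) = 0}"

text \<open>Vertex-coloured multigraphs (loops allowed): a vertex set V, a multiset E of
edges given by their two endpoints, and a colouring alpha.\<close>

type_synonym cmgraph = "nat set \<times> (nat \<times> nat) multiset \<times> (nat \<Rightarrow> nat)"

definition mg_V :: "cmgraph \<Rightarrow> nat set" where "mg_V G = fst G"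
definition mg_E :: "cmgraph \<Rightarrow> (nat \<times> nat) multiset" where "mg_E G = fst (snd G)"
definition mg_col :: "cmgraph \<Rightarrow> nat \<Rightarrow> nat" where "mg_col G = snd (snd G)"

text \<open>Degree: non-loop incidences plus twice the loops (a loop (u,u) counts twice).\<close>

definition mg_degree :: "cmgraph \<Rightarrow> nat \<Rightarrow> nat" where
  "mg_degree G u = size {# e \<in># mg_E G. fst e = u #} + size {# e \<in># mg_E G. snd e = u #}"

definition wf_cmgraph :: "nat set \<Rightarrow> cmgraph \<Rightarrow> bool" where
  "wf_cmgraph Acol G \<longleftrightarrow> finite (mg_V G) \<and>
     (\<forall>e\<in>#mg_E G. fst e \<in> mg_V G \<and> snd e \<in> mg_V G) \<and>
     (\<forall>u\<in>mg_V G. mg_col G u \<in> Acol)"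

definition lewis_matrix :: "('x \<Rightarrow> cmgraph) \<Rightarrow> nat \<Rightarrow> 'x \<Rightarrow> nat" where
  "lewis_matrix \<Gamma> a x = card {u \<in> mg_V (\<Gamma> x). mg_col (\<Gamma> x) u = a}"

definition lewis_instance ::
  "('x::finite \<Rightarrow> 'r \<Rightarrow> nat) \<Rightarrow> ('x \<Rightarrow> 'r \<Rightarrow> nat) \<Rightarrow> nat set \<Rightarrow> (nat \<Rightarrow> nat) \<Rightarrow> ('x \<Rightarrow> cmgraph) \<Rightarrow> bool" where
  "lewis_instance sm sp Acol val \<Gamma> \<longleftrightarrow>
     (\<forall>a\<in>Acol. 1 \<le> val a) \<and>
     (\<forall>x. wf_cmgraph Acol (\<Gamma> x)) \<and>
     (\<forall>x. \<forall>u\<in>mg_V (\<Gamma> x). mg_degree (\<Gamma> x) u = val (mg_col (\<Gamma> x) u)) \<and>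
     sf_instance Acol (lewis_matrix \<Gamma>) (stoich sm sp)"

definition lewis_realization ::
  "('x::finite \<Rightarrow> 'r \<Rightarrow> nat) \<Rightarrow> ('x \<Rightarrow> 'r \<Rightarrow> nat) \<Rightarrow> nat set \<Rightarrow> (nat \<Rightarrow> nat) \<Rightarrow> ('x \<Rightarrow> cmgraph) \<Rightarrow> bool" where
  "lewis_realization sm sp Acol val \<Gamma> \<longleftrightarrow>
     lewis_instance sm sp Acol val \<Gamma> \<and>
     sf_realization Acol (lewis_matrix \<Gamma>) (stoich sm sp)"

end

theory Submission
  imports Defs "HOL-Library.Nat_Bijection"
begin

lemma swap_lin:
  fixes c :: "'i \<Rightarrow> 'a::comm_ring"
  shows "(\<Sum>x\<in>X. (\<Sum>i\<in>I. c i * g i x) * s x) = (\<Sum>i\<in>I. c i * (\<Sum>x\<in>X. g i x * s x))"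
  by (simp add: sum_distrib_left sum_distrib_right mult.assoc sum.swap[of _ X])

lemma kernel_basis:
  fixes S :: "'x::finite \<Rightarrow> 'r \<Rightarrow> int"
  assumes "finite R"
  shows "\<exists>n (f::nat \<Rightarrow> 'x \<Rightarrow> int). (\<forall>i<n. \<forall>r\<in>R. (\<Sum>x\<in>UNIV. f i x * S x r) = 0) \<and>
    (\<forall>v::'x\<Rightarrow>real. (\<forall>r\<in>R. (\<Sum>x\<in>UNIV. v x * real_of_int (S x r)) = 0) \<longrightarrow>
        (\<exists>c. \<forall>x. v x = (\<Sum>i<n. c i * real_of_int (f i x))))"
  using assms
proof (induction R rule: finite_induct)
  case empty
  obtain xs where xs: "set xs = (UNIV::'x set)" "distinct xs"
    using finite_distinct_list[OF finite_UNIV] by metis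
  define f where "f i x = (if x = xs!i then 1 else (0::int))" for i x
  have "\<forall>v::'x\<Rightarrow>real. (\<exists>c. \<forall>x. v x = (\<Sum>i<length xs. c i * real_of_int (f i x)))"
  proof (intro allI exI)
    fix v :: "'x \<Rightarrow> real" and x
    have fr: "real_of_int (f i x) = (if x = xs!i then 1 else 0)" for i by (simp add: f_def)
    have "(\<Sum>i<length xs. v (xs!i) * real_of_int (f i x)) = (\<Sum>i<length xs. v (xs!i) * (if x = xs!i then 1 else 0))"
      by (rule sum.cong) (simp_all add: fr)
    also have "\<dots> = (\<Sum>y\<in>set xs. v y * (if x = y then 1 else 0))"
      using sum.reindex_bij_betw[OF bij_betw_nth[OF xs(2) refl refl], of "\<lambda>y. v y * (if x = y then 1 else 0)"]
      by simp
    also have "\<dots> = (\<Sum>y\<in>UNIV. if x = y then v y else 0)" using xs(1) by (intro sum.cong) auto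
    also have "\<dots> = v x" by simp
    finally show "v x = (\<Sum>i<length xs. v (xs!i) * real_of_int (f i x))" by simp
  qed
  then show ?case by blast
next
  case (insert r R)
  obtain n :: nat and f where f1: "\<forall>i<n. \<forall>r\<in>R. (\<Sum>x\<in>UNIV. f i x * S x r) = 0"
    and f2: "\<forall>v::'x\<Rightarrow>real. (\<forall>r\<in>R. (\<Sum>x\<in>UNIV. v x * real_of_int (S x r)) = 0) \<longrightarrow>
        (\<exists>c. \<forall>x. v x = (\<Sum>i<n. c i * real_of_int (f i x)))"
    using insert.IH by blast
  define cc where "cc i = (\<Sum>x\<in>UNIV. f i x * S x r)" for i
  show ?case
  proof (cases "\<forall>i<n. cc i = 0")
    case True
    have "\<forall>i<n. \<forall>s\<in>insert r R. (\<Sum>x\<in>UNIV. f i x * S x s) = 0"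
      using f1 True by (auto simp: cc_def)
    moreover have "\<forall>v::'x\<Rightarrow>real. (\<forall>s\<in>insert r R. (\<Sum>x\<in>UNIV. v x * real_of_int (S x s)) = 0) \<longrightarrow>
        (\<exists>c. \<forall>x. v x = (\<Sum>i<n. c i * real_of_int (f i x)))"
      using f2 by auto
    ultimately show ?thesis by blast
  next
    case False
    then obtain j where j: "j < n" "cc j \<noteq> 0" by auto
    define g where "g i x = cc j * f i x - cc i * f j x" for i x
    have gs: "(\<Sum>x\<in>UNIV. g i x * S x s) = cc j * (\<Sum>x\<in>UNIV. f i x * S x s) - cc i * (\<Sum>x\<in>UNIV. f j x * S x s)" for i s
      by (simp add: g_def algebra_simps sum_subtractf sum_distrib_left)
    have "\<forall>i<n. \<forall>s\<in>insert r R. (\<Sum>x\<in>UNIV. g i x * S x s) = 0"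
    proof (intro allI impI ballI)
      fix i s assume i: "i < n" and s: "s \<in> insert r R"
      show "(\<Sum>x\<in>UNIV. g i x * S x s) = 0"
      proof (cases "s = r")
        case True then show ?thesis by (simp add: gs cc_def[symmetric])
      next
        case False then show ?thesis using s f1 i j by (simp add: gs)
      qed
    qed
    moreover have "\<forall>v::'x\<Rightarrow>real. (\<forall>s\<in>insert r R. (\<Sum>x\<in>UNIV. v x * real_of_int (S x s)) = 0) \<longrightarrow>
        (\<exists>c. \<forall>x. v x = (\<Sum>i<n. c i * real_of_int (g i x)))"
    proof (intro allI impI)
      fix v :: "'x \<Rightarrow> real"
      assume v: "\<forall>s\<in>insert r R. (\<Sum>x\<in>UNIV. v x * real_of_int (S x s)) = 0"
      have vR: "\<forall>s\<in>R. (\<Sum>x\<in>UNIV. v x * real_of_int (S x s)) = 0" using v by simp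
      obtain c where c: "\<forall>x. v x = (\<Sum>i<n. c i * real_of_int (f i x))" using f2 vR by blast
      have "0 = (\<Sum>x\<in>UNIV. v x * real_of_int (S x r))" using v by simp
      also have "\<dots> = (\<Sum>x\<in>UNIV. (\<Sum>i<n. c i * real_of_int (f i x)) * real_of_int (S x r))"
        using c by simp
      also have "\<dots> = (\<Sum>i<n. c i * (\<Sum>x\<in>UNIV. real_of_int (f i x) * real_of_int (S x r)))"
        by (rule swap_lin)
      also have "\<dots> = (\<Sum>i<n. c i * real_of_int (cc i))" by (simp add: cc_def)
      finally have h: "(\<Sum>i<n. c i * real_of_int (cc i)) = 0" by simp
      define d where "d = real_of_int (cc j)"
      have d: "d \<noteq> 0" using j by (simp add: d_def)
      have "v x = (\<Sum>i<n. (c i / d) * real_of_int (g i x))" for x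
      proof -
        have "(\<Sum>i<n. (c i / d) * real_of_int (g i x))
            = (\<Sum>i<n. c i * real_of_int (f i x) - (c i * real_of_int (cc i)) * (real_of_int (f j x) / d))"
          by (rule sum.cong) (auto simp: g_def d_def[symmetric] field_simps d)
        also have "\<dots> = (\<Sum>i<n. c i * real_of_int (f i x)) - (\<Sum>i<n. c i * real_of_int (cc i)) * (real_of_int (f j x) / d)"
          by (simp add: sum_subtractf sum_distrib_right sum_divide_distrib)
        also have "\<dots> = v x" using h c by simp
        finally show ?thesis by simp
      qed
      then show "\<exists>c. \<forall>x. v x = (\<Sum>i<n. c i * real_of_int (g i x))"
        by (intro exI[of _ "\<lambda>i. c i / d"]) simp
    qed
    ultimately show ?thesis by blast
  qed
qed


lemma sf_cong:
  assumes "\<forall>a\<in>Acol. \<forall>x. A a x = A' a x"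
  shows "sf_realization Acol A S = sf_realization Acol A' S"
proof -
  have "sf_instance Acol A S = sf_instance Acol A' S"
    unfolding sf_instance_def using assms by auto
  moreover have "\<And>l x. (\<Sum>a\<in>Acol. l a * real (A a x)) = (\<Sum>a\<in>Acol. l a * real (A' a x))"
    using assms by (intro sum.cong) auto
  ultimately show ?thesis unfolding sf_realization_def by simp
qed

lemma graph_exists:
  fixes A :: "nat \<Rightarrow> 'x \<Rightarrow> nat"
  assumes "finite Acol"
  shows "\<exists>\<Gamma>. (\<forall>x. wf_cmgraph Acol (\<Gamma> x)) \<and> (\<forall>x. \<forall>u\<in>mg_V (\<Gamma> x). mg_degree (\<Gamma> x) u = 2)
     \<and> (\<forall>a\<in>Acol. \<forall>x. lewis_matrix \<Gamma> a x = A a x)"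
proof -
  define V :: "'x \<Rightarrow> nat set" where "V x = prod_encode ` (SIGMA a:Acol. {..<A a x})" for x
  define \<Gamma> :: "'x \<Rightarrow> cmgraph" where "\<Gamma> x = (V x, image_mset (\<lambda>u. (u,u)) (mset_set (V x)), \<lambda>u. fst (prod_decode u))" for x
  have finV: "finite (V x)" for x using assms by (simp add: V_def)
  have wf: "wf_cmgraph Acol (\<Gamma> x)" for x
    using finV[of x] unfolding wf_cmgraph_def \<Gamma>_def mg_V_def mg_E_def mg_col_def
    by (auto simp: V_def prod_encode_inverse)
  have deg: "mg_degree (\<Gamma> x) u = 2" if "u \<in> mg_V (\<Gamma> x)" for x u
  proof -
    have u: "u \<in> V x" using that by (simp add: \<Gamma>_def mg_V_def)
    have "{#e \<in># image_mset (\<lambda>u. (u,u)) (mset_set (V x)). fst e = u#}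
        = image_mset (\<lambda>u. (u,u)) (mset_set {w \<in> V x. w = u})"
      using finV[of x] by (simp add: filter_mset_image_mset)
    moreover have "{#e \<in># image_mset (\<lambda>u. (u,u)) (mset_set (V x)). snd e = u#}
        = image_mset (\<lambda>u. (u,u)) (mset_set {w \<in> V x. w = u})"
      using finV[of x] by (simp add: filter_mset_image_mset)
    moreover have "{w \<in> V x. w = u} = {u}" using u by auto
    ultimately show ?thesis by (simp add: mg_degree_def \<Gamma>_def mg_E_def)
  qed
  have lm: "lewis_matrix \<Gamma> a x = A a x" if "a \<in> Acol" for a x
  proof -
    have "{u \<in> mg_V (\<Gamma> x). mg_col (\<Gamma> x) u = a} = prod_encode ` ({a} \<times> {..<A a x})"
      using that by (auto simp: \<Gamma>_def mg_V_def mg_col_def V_def prod_encode_inverse)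
    moreover have "card (prod_encode ` ({a} \<times> {..<A a x})) = A a x"
      by (subst card_image) (auto intro: inj_prod_encode simp: card_cartesian_product_singleton)
    ultimately show ?thesis by (simp add: lewis_matrix_def)
  qed
  show ?thesis using wf deg lm by blast
qed

lemma fwd:
  fixes S :: "'x::finite \<Rightarrow> 'r \<Rightarrow> int"
  assumes "sf_instance Acol A S"
  shows "\<exists>m :: 'x \<Rightarrow> real. (\<forall>x. 0 < m x) \<and> (\<forall>r. (\<Sum>x\<in>UNIV. m x * of_int (S x r)) = 0)"
proof -
  from assms have fin: "finite Acol" and col: "\<forall>x. \<exists>a\<in>Acol. A a x \<noteq> 0"
    and ker: "\<forall>a\<in>Acol. \<forall>r. (\<Sum>x\<in>UNIV. int (A a x) * S x r) = 0"
    unfolding sf_instance_def by auto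
  define m where "m x = (\<Sum>a\<in>Acol. 1 * real (A a x))" for x
  have "0 < m x" for x
  proof -
    obtain a where "a \<in> Acol" "A a x \<noteq> 0" using col by blast
    then show ?thesis unfolding m_def by (intro sum_pos2[OF fin]) auto
  qed
  moreover have "(\<Sum>x\<in>UNIV. m x * of_int (S x r)) = 0" for r
  proof -
    have "(\<Sum>x\<in>UNIV. m x * of_int (S x r)) = (\<Sum>a\<in>Acol. 1 * (\<Sum>x\<in>UNIV. real (A a x) * of_int (S x r)))"
      unfolding m_def by (rule swap_lin)
    also have "\<dots> = (\<Sum>a\<in>Acol. real_of_int (\<Sum>x\<in>UNIV. int (A a x) * S x r))" by simp
    also have "\<dots> = 0" using ker by simp
    finally show ?thesis .
  qed
  ultimately show ?thesis by blast
qed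


lemma bwd:
  fixes S :: "'x::finite \<Rightarrow> 'r::finite \<Rightarrow> int" and m :: "'x \<Rightarrow> real"
  assumes mpos: "\<forall>x. 0 < m x" and mker: "\<forall>r. (\<Sum>x\<in>UNIV. m x * of_int (S x r)) = 0"
  shows "\<exists>Acol A. sf_realization Acol A S"
proof -
  obtain n :: nat and f :: "nat \<Rightarrow> 'x \<Rightarrow> int"
    where f1: "\<forall>i<n. \<forall>r\<in>UNIV. (\<Sum>x\<in>UNIV. f i x * S x r) = 0"
    and f2: "\<forall>v::'x\<Rightarrow>real. (\<forall>r\<in>UNIV. (\<Sum>x\<in>UNIV. v x * real_of_int (S x r)) = 0) \<longrightarrow>
        (\<exists>c. \<forall>x. v x = (\<Sum>i<n. c i * real_of_int (f i x)))"
    using kernel_basis[of "UNIV :: 'r set" S] by auto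
  obtain lam where lam: "\<forall>x. m x = (\<Sum>i<n. lam i * real_of_int (f i x))" using f2 mker by blast
  define C where "C x = (\<Sum>i<n. \<bar>real_of_int (f i x)\<bar>)" for x
  have "\<forall>x. \<exists>N::nat. C x < real N * m x" using mpos ex_less_of_nat_mult by blast
  then obtain Nf where Nf: "\<forall>x. C x < real (Nf x) * m x" by metis
  define N where "N = (\<Sum>x\<in>UNIV. Nf x)"
  have NC: "C x < real N * m x" for x
  proof -
    have "Nf x \<le> N" unfolding N_def by (rule member_le_sum) auto
    then have "real (Nf x) * m x \<le> real N * m x" using less_imp_le[OF mpos[rule_format, of x]] by (intro mult_right_mono) auto
    then show ?thesis using Nf by (meson less_le_trans)
  qed
  define p where "p x = (\<Sum>i<n. \<lfloor>real N * lam i\<rfloor> * f i x)" for x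
  have ppos: "1 \<le> p x" for x
  proof -
    have e: "real_of_int (p x) = real N * m x - (\<Sum>i<n. (real N * lam i - of_int \<lfloor>real N * lam i\<rfloor>) * real_of_int (f i x))"
      unfolding p_def lam[rule_format] by (simp add: sum_distrib_left sum_subtractf[symmetric] algebra_simps)
    have "(\<Sum>i<n. (real N * lam i - of_int \<lfloor>real N * lam i\<rfloor>) * real_of_int (f i x)) \<le> C x"
      unfolding C_def
    proof (rule sum_mono)
      fix i
      define t where "t = real N * lam i - of_int \<lfloor>real N * lam i\<rfloor>"
      have t: "0 \<le> t" "t \<le> 1" unfolding t_def
        using of_int_floor_le[of "real N * lam i"] real_of_int_floor_gt_diff_one[of "real N * lam i"] by linarith+
      have "t * real_of_int (f i x) \<le> \<bar>t * real_of_int (f i x)\<bar>" by simp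
      also have "\<dots> = t * \<bar>real_of_int (f i x)\<bar>" using t by (simp add: abs_mult)
      also have "\<dots> \<le> 1 * \<bar>real_of_int (f i x)\<bar>" using t by (intro mult_right_mono) auto
      finally show "t * real_of_int (f i x) \<le> \<bar>real_of_int (f i x)\<bar>" by simp
    qed
    then have "0 < real_of_int (p x)" using e NC[of x] by linarith
    then show ?thesis by simp
  qed
  have pker: "(\<Sum>x\<in>UNIV. p x * S x r) = 0" for r
  proof -
    have "(\<Sum>x\<in>UNIV. p x * S x r) = (\<Sum>i<n. \<lfloor>real N * lam i\<rfloor> * (\<Sum>x\<in>UNIV. f i x * S x r))"
      unfolding p_def by (rule swap_lin)
    also have "\<dots> = 0" using f1 by simp
    finally show ?thesis .
  qed
  define B where "B = (\<Sum>i<n. \<Sum>x\<in>UNIV. \<bar>f i x\<bar>)"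
  have fB: "\<bar>f i x\<bar> \<le> B" if "i < n" for i x
  proof -
    have "\<bar>f i x\<bar> \<le> (\<Sum>x\<in>UNIV. \<bar>f i x\<bar>)" by (rule member_le_sum) auto
    also have "\<dots> \<le> B" unfolding B_def using that
      by (intro member_le_sum[of i "{..<n}" "\<lambda>i. \<Sum>x\<in>UNIV. \<bar>f i x\<bar>"]) (auto intro: sum_nonneg)
    finally show ?thesis .
  qed
  have B0: "0 \<le> B" unfolding B_def by (intro sum_nonneg) auto
  define R where "R a x = (if a = 0 then p x else (B+1) * p x + f (a-1) x)" for a x
  have Rpos: "1 \<le> R a x" if "a \<le> n" for a x
  proof (cases "a = 0")
    case True then show ?thesis using ppos by (simp add: R_def)
  next
    case False
    then have "a - 1 < n" using that by simp
    then have "\<bar>f (a-1) x\<bar> \<le> B" by (rule fB)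
    moreover have "(B+1) * 1 \<le> (B+1) * p x" using ppos B0 by (intro mult_left_mono) auto
    ultimately show ?thesis using False unfolding R_def by simp
  qed
  have Rker: "(\<Sum>x\<in>UNIV. R a x * S x r) = 0" if "a \<le> n" for a r
  proof (cases "a = 0")
    case True then show ?thesis using pker by (simp add: R_def)
  next
    case False
    have "(\<Sum>x\<in>UNIV. R a x * S x r) = (B+1) * (\<Sum>x\<in>UNIV. p x * S x r) + (\<Sum>x\<in>UNIV. f (a-1) x * S x r)"
      using False by (simp add: R_def algebra_simps sum.distrib sum_distrib_left)
    moreover have "a - 1 < n" using that False by simp
    ultimately show ?thesis using pker f1 by simp
  qed
  define A where "A a x = nat (R a x)" for a x
  have AR: "int (A a x) = R a x" if "a \<le> n" for a x using Rpos[OF that, of x] by (simp add: A_def)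
  have AR': "real (A a x) = real_of_int (R a x)" if "a \<le> n" for a x
    using AR[OF that] by (metis of_int_of_nat_eq)
  have inst: "sf_instance {..n} A S"
    unfolding sf_instance_def
  proof (intro conjI ballI allI)
    show "finite {..n}" by simp
    show "{..n} \<noteq> {}" by auto
    fix x show "\<exists>a\<in>{..n}. A a x \<noteq> 0" using AR[of 0 x] Rpos[of 0 x] by (intro bexI[of _ 0]) auto
  next
    fix a r assume "a \<in> {..n}"
    then show "(\<Sum>x\<in>UNIV. int (A a x) * S x r) = 0" using AR Rker by simp
  qed
  have span: "{v::'x\<Rightarrow>real. \<exists>l::nat\<Rightarrow>real. \<forall>x. v x = (\<Sum>a\<in>{..n}. l a * real (A a x))}
      = {v. \<forall>r. (\<Sum>x\<in>UNIV. v x * of_int (S x r)) = 0}"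
  proof
    show "{v::'x\<Rightarrow>real. \<exists>l::nat\<Rightarrow>real. \<forall>x. v x = (\<Sum>a\<in>{..n}. l a * real (A a x))}
      \<subseteq> {v. \<forall>r. (\<Sum>x\<in>UNIV. v x * of_int (S x r)) = 0}"
    proof
      fix v :: "'x \<Rightarrow> real"
      assume "v \<in> {v::'x\<Rightarrow>real. \<exists>l::nat\<Rightarrow>real. \<forall>x. v x = (\<Sum>a\<in>{..n}. l a * real (A a x))}"
      then obtain l :: "nat \<Rightarrow> real" where l: "\<forall>x. v x = (\<Sum>a\<in>{..n}. l a * real (A a x))" by blast
      then have vl: "v = (\<lambda>x. (\<Sum>a\<in>{..n}. l a * real (A a x)))" by auto
      have "(\<Sum>x\<in>UNIV. v x * of_int (S x r)) = 0" for r
      proof -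
        have "(\<Sum>x\<in>UNIV. v x * of_int (S x r)) = (\<Sum>a\<in>{..n}. l a * (\<Sum>x\<in>UNIV. real (A a x) * of_int (S x r)))"
          unfolding vl by (rule swap_lin)
        also have "\<dots> = (\<Sum>a\<in>{..n}. l a * real_of_int (\<Sum>x\<in>UNIV. int (A a x) * S x r))" by simp
        also have "\<dots> = 0" using inst unfolding sf_instance_def by simp
        finally show ?thesis .
      qed
      then show "v \<in> {v. \<forall>r. (\<Sum>x\<in>UNIV. v x * of_int (S x r)) = 0}" by simp
    qed
  next
    show "{v. \<forall>r. (\<Sum>x\<in>UNIV. v x * of_int (S x r)) = 0} \<subseteq>
      {v::'x\<Rightarrow>real. \<exists>l::nat\<Rightarrow>real. \<forall>x. v x = (\<Sum>a\<in>{..n}. l a * real (A a x))}"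
    proof
      fix v :: "'x \<Rightarrow> real"
      assume "v \<in> {v. \<forall>r. (\<Sum>x\<in>UNIV. v x * of_int (S x r)) = 0}"
      then obtain c where c: "\<forall>x. v x = (\<Sum>i<n. c i * real_of_int (f i x))" using f2 by blast
      define l where "l a = (if a = 0 then - (real_of_int (B+1)) * (\<Sum>i<n. c i) else c (a-1))" for a
      have "v x = (\<Sum>a\<in>{..n}. l a * real (A a x))" for x
      proof -
        have "(\<Sum>a\<in>{..n}. l a * real (A a x)) = l 0 * real (A 0 x) + (\<Sum>i<n. l (Suc i) * real (A (Suc i) x))"
          by (rule sum.atMost_shift)
        also have "(\<Sum>i<n. l (Suc i) * real (A (Suc i) x))
           = (\<Sum>i<n. c i * (real_of_int (B+1) * real_of_int (p x)) + c i * real_of_int (f i x))"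
          by (rule sum.cong) (auto simp: l_def AR' R_def algebra_simps)
        also have "\<dots> = (\<Sum>i<n. c i) * (real_of_int (B+1) * real_of_int (p x)) + (\<Sum>i<n. c i * real_of_int (f i x))"
          by (simp add: sum.distrib sum_distrib_right)
        also have "l 0 * real (A 0 x) = - (real_of_int (B+1)) * (\<Sum>i<n. c i) * real_of_int (p x)"
          by (simp add: l_def AR' R_def)
        finally show ?thesis using c by (simp add: algebra_simps)
      qed
      then show "v \<in> {v::'x\<Rightarrow>real. \<exists>l::nat\<Rightarrow>real. \<forall>x. v x = (\<Sum>a\<in>{..n}. l a * real (A a x))}" by blast
    qed
  qed
  show ?thesis using inst span unfolding sf_realization_def by blast
qed

theorem proposition13:
  fixes sm sp :: "'x::finite \<Rightarrow> 'r::finite \<Rightarrow> nat"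
  assumes "closed_RN sm sp"
  shows "(\<exists>Acol val \<Gamma>. lewis_realization sm sp Acol val \<Gamma>) \<longleftrightarrow> conservative sm sp"
proof
  assume "\<exists>Acol val \<Gamma>. lewis_realization sm sp Acol val \<Gamma>"
  then obtain Acol val \<Gamma> where "lewis_realization sm sp Acol val \<Gamma>" by blast
  then have "sf_instance Acol (lewis_matrix \<Gamma>) (stoich sm sp)"
    unfolding lewis_realization_def lewis_instance_def by blast
  from fwd[OF this] show "conservative sm sp" unfolding conservative_def by blast
next
  assume "conservative sm sp"
  then obtain m :: "'x \<Rightarrow> real" where m: "\<forall>x. 0 < m x" "\<forall>r. (\<Sum>x\<in>UNIV. m x * of_int (stoich sm sp x r)) = 0"
    unfolding conservative_def by blast
  from bwd[OF m] obtain Acol A where r: "sf_realization Acol A (stoich sm sp)" by blast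
  have fin: "finite Acol" using r unfolding sf_realization_def sf_instance_def by blast
  obtain \<Gamma> where G: "\<forall>x. wf_cmgraph Acol (\<Gamma> x)" "\<forall>x. \<forall>u\<in>mg_V (\<Gamma> x). mg_degree (\<Gamma> x) u = 2"
     "\<forall>a\<in>Acol. \<forall>x. lewis_matrix \<Gamma> a x = A a x"
    using graph_exists[OF fin, of A] by blast
  have r': "sf_realization Acol (lewis_matrix \<Gamma>) (stoich sm sp)"
    using sf_cong[OF G(3), THEN iffD2, OF r] .
  then have "lewis_realization sm sp Acol (\<lambda>_. 2) \<Gamma>"
    unfolding lewis_realization_def lewis_instance_def using G r' unfolding sf_realization_def by auto
  then show "\<exists>Acol val \<Gamma>. lewis_realization sm sp Acol val \<Gamma>" by blast
qed

end
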